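(* Let $\mathcal A^\Psi=\Psi\circ\mathcal A\circ\Psi^{-1}$. Then $\Psi$ maps $\mathcal T_0(\mathrm{OP})$ bijectively onto $I^{\mathcal D}\times I^{\mathbb N}_\infty$, and for all $f\in I^{\mathcal D}$ and $\alpha\in I^{\mathbb N}_\infty$, $$\mathcal A^\Psi(f,\alpha)=\bigl(f(\,\cdot\,+\tau^{-1}(\mathbb O[\alpha]-\alpha)),\ \mathbb O[\alpha]\bigr).$$
   Context: Let $I=\{0,1\}$. The graded graph $\mathrm{OP}$ has vertex sets $\mathrm{OP}_0=I$, $\mathrm{OP}_{n+1}=\mathrm{OP}_n\times\mathrm{OP}_n$; for $v=(v_0,v_1)\in\mathrm{OP}_{n+1}$ there is an edge of index $0$ from $v_0$ to $v$ and an edge of index $1$ from $v_1$ to $v$ (two distinct edges if $v_0=v_1$), and no other edges. $\mathcal T(\mathrm{OP})$ is the set of infinite paths $x=(v_0,e_0,v_1,e_1,\dots)$, $v_n\in\mathrm{OP}_n$, $e_n$ an edge from $v_n$ to $v_{n+1}$. A path is determined by its vertex on floor $N$ and the indices of its edges below floor $N$. The adic transformation $\mathcal A$ is defined on paths having at least one edge of index $0$: if $e_n$ is the first edge of $x$ with index $0$, then $\mathcal Ax$ coincides with $x$ from floor $n+1$ on, its edge from floor $n$ to $n+1$ has index $1$, and all its edges below floor $n$ have index $0$. $\mathcal T_0(\mathrm{OP})$ is the set of paths $x$ for which $\mathcal A^nx$ is defined for all $n\in\mathbb Z$. $\mathcal D=\bigoplus_{i\ge0}\mathbb Z/2\mathbb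 Z$ with generators $g_0,g_1,\dots$, $\mathcal D_n=\langle g_0,\dots,g_{n-1}\rangle$. $I^{\mathbb N}$ is the group of sequences $(\alpha_i)_{i\ge1}$ under coordinatewise addition mod 2; $\tau\colon\mathcal D\to I^{\mathbb N}$, $\tau(\sum_i\alpha_ig_{i-1})=(\alpha_i)_{i\ge1}$ (an injective homomorphism onto the finitely supported sequences). $I^{\mathbb N}_\infty$ is the set of sequences with infinitely many zeros and infinitely many ones. The odometer $\mathbb O$: if $\alpha_1=\dots=\alpha_{n-1}=1$ and $\alpha_n=0$, then $\mathbb O[\alpha]_i=0$ for $i<n$, $\mathbb O[\alpha]_n=1$, $\mathbb O[\alpha]_i=\alpha_i$ for $i>n$. $\Psi=(F,A)$: define $\Phi[v]\in I^{\mathcal D_n}$ for $v\in\mathrm{OP}_n$ by $\Phi[v](0)=v$ if $n=0$, and for $v=(v_0,v_1)\in\mathrm{OP}_{n+1}$, $\Phi[v](h)=\Phi[v_0](h)$ for $h\in\mathcal D_n$, $\Phi[v](h)=\Phi[v_1](g_n+h)$ for $h\in\mathcal D_{n+1}\setminus\mathcal D_n$. For a path $x$ with vertices $v_n$ and edges $e_n$, $A[x]=\alpha$ with $\alpha_n$ the index of $e_{n-1}$, and $F[x](g)=\Phi[v_n](g+\sum_{i=0}^{n-1}\alpha_{i+1}g_i)$ for $g\in\mathcal D_n$, $n\ge1$. $\Psi[x]=(F[x],A[x])$ is a homeomorphism $\mathcal T(\mathrm{OP})\to I^{\mathcal D}\times I^{\mathbb N}$. *)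

theory Defs
  imports Main "HOL-Library.FSet"
begin

text \<open>The index set I = {0,1} is rendered as bool (0 = False, 1 = True);
  addition in I (mod 2) is exclusive or.\<close>

datatype optree = Leaf bool | Node optree optree

fun OP :: "nat \<Rightarrow> optree set" where
  "OP 0 = range Leaf"
| "OP (Suc n) = {Node a b | a b. a \<in> OP n \<and> b \<in> OP n}"

text \<open>The edge of index i into v = (v_0,v_1) starts at v_i.\<close>
fun comp :: "bool \<Rightarrow> optree \<Rightarrow> optree" where
  "comp False (Node a b) = a"
| "comp True (Node a b) = b"
| "comp _ (Leaf c) = Leaf c"

text \<open>A path is given by its vertex sequence vs (vs n on floor n) and the
  indices es of its edges (es n = index of the edge e_n from floor n to n+1).\<close>
type_synonym path = "(nat \<Rightarrow> optree) \<times> (nat \<Rightarrow> bool)"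

definition paths :: "path set" where
  "paths = {(vs, es). \<forall>n. vs n \<in> OP n \<and> vs n = comp (es n) (vs (Suc n))}"

definition adic_dom :: "path set" where
  "adic_dom = {x \<in> paths. \<exists>n. \<not> snd x n}"

text \<open>descend es N w d: the vertex on floor N - d of the path which has vertex w
  on floor N and edge indices es below floor N.\<close>
fun descend :: "(nat \<Rightarrow> bool) \<Rightarrow> nat \<Rightarrow> optree \<Rightarrow> nat \<Rightarrow> optree" where
  "descend es N w 0 = w"
| "descend es N w (Suc d) = comp (es (N - Suc d)) (descend es N w d)"

definition adic :: "path \<Rightarrow> path" where
  "adic x = (let vs = fst x; es = snd x; n = (LEAST k. \<not> es k);
     es' = (\<lambda>k. if k < n then False else if k = n then True else es k)
   in ((\<lambda>k. if n < k then vs k else descend es' (Suc n) (vs (Suc n)) (Suc n - k)), es'))"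

text \<open>T_0(OP): paths x such that A^k x is defined for every integer k.  For k \<ge> 0
  this means x, A x, ..., A^(k-1) x all lie in the domain of A; for negative
  exponent -k it means there is a path y with y, ..., A^(k-1) y in the domain and
  A^k y = x.\<close>
definition T0 :: "path set" where
  "T0 = {x \<in> paths. (\<forall>k. (adic ^^ k) x \<in> adic_dom) \<and>
     (\<forall>k. \<exists>y \<in> paths. (\<forall>j<k. (adic ^^ j) y \<in> adic_dom) \<and> (adic ^^ k) y = x)}"

text \<open>D = direct sum of copies of Z/2 with generators g_0, g_1, ...: an element
  sum_i a_i g_i is represented by the finite set {i. a_i = 1}; addition is
  symmetric difference. D_n = finite sets contained in {..<n}.\<close>
definition dadd :: "nat fset \<Rightarrow> nat fset \<Rightarrow> nat fset" where
  "dadd A B = (A |-| B) |\<union>| (B |-| A)"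

definition gen :: "nat \<Rightarrow> nat fset" where
  "gen i = {|i|}"

text \<open>Sequences (alpha_i)_(i\<ge>1) in I^N are represented with a shift of index:
  a :: nat \<Rightarrow> bool with a k = alpha_(k+1).  Thus tau(sum alpha_i g_(i-1)) is
  the sequence k \<mapsto> [g_k occurs].\<close>
definition tau :: "nat fset \<Rightarrow> (nat \<Rightarrow> bool)" where
  "tau h = (\<lambda>k. k |\<in>| h)"

definition seq_sub :: "(nat \<Rightarrow> bool) \<Rightarrow> (nat \<Rightarrow> bool) \<Rightarrow> (nat \<Rightarrow> bool)" where
  "seq_sub a b = (\<lambda>k. a k \<noteq> b k)"

definition I_inf :: "(nat \<Rightarrow> bool) set" where
  "I_inf = {a. infinite {k. a k} \<and> infinite {k. \<not> a k}}"

definition odometer :: "(nat \<Rightarrow> bool) \<Rightarrow> (nat \<Rightarrow> bool)" where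
  "odometer a = (let n = (LEAST k. \<not> a k) in
     (\<lambda>k. if k < n then False else if k = n then True else a k))"

fun phi :: "nat \<Rightarrow> optree \<Rightarrow> nat fset \<Rightarrow> bool" where
  "phi 0 (Leaf b) h = b"
| "phi (Suc n) (Node v0 v1) h =
     (if (\<forall>i. i |\<in>| h \<longrightarrow> i < n) then phi n v0 h else phi n v1 (dadd (gen n) h))"
| "phi _ _ _ = False"

text \<open>F[x](g) = Phi[v_n](g + sum_(i<n) alpha_(i+1) g_i) for g in D_n, n \<ge> 1;
  we use the particular n = 1 + max g (resp. n = 1 if g = 0); the value does not
  depend on the admissible n.\<close>
definition Fmap :: "path \<Rightarrow> nat fset \<Rightarrow> bool" where
  "Fmap x g = (let n = Suc (Max (insert 0 (fset g))) in
     phi n (fst x n) (dadd g (Abs_fset {i. i < n \<and> snd x i})))"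

definition Amap :: "path \<Rightarrow> (nat \<Rightarrow> bool)" where
  "Amap x = snd x"

definition Psi :: "path \<Rightarrow> (nat fset \<Rightarrow> bool) \<times> (nat \<Rightarrow> bool)" where
  "Psi x = (Fmap x, Amap x)"

definition adicPsi :: "(nat fset \<Rightarrow> bool) \<times> (nat \<Rightarrow> bool) \<Rightarrow> (nat fset \<Rightarrow> bool) \<times> (nat \<Rightarrow> bool)" where
  "adicPsi = Psi \<circ> adic \<circ> inv_into paths Psi"

end

theory Submission imports Defs begin
lemma dadd_mem: "k |\<in>| dadd A B \<longleftrightarrow> (k |\<in>| A) \<noteq> (k |\<in>| B)"
  unfolding dadd_def by auto
lemma dadd_comm: "dadd A B = dadd B A" by (rule fset_eqI) (auto simp: dadd_mem)
lemma dadd_assoc: "dadd (dadd A B) C = dadd A (dadd B C)" by (rule fset_eqI) (auto simp: dadd_mem)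
lemma dadd_self: "dadd A A = {||}" by (rule fset_eqI) (auto simp: dadd_mem)
lemma dadd_empty: "dadd A {||} = A" by (rule fset_eqI) (auto simp: dadd_mem)

definition Sset :: "(nat \<Rightarrow> bool) \<Rightarrow> nat \<Rightarrow> nat fset" where
  "Sset es n = Abs_fset {i. i < n \<and> es i}"

lemma Sset_mem: "k |\<in>| Sset es n \<longleftrightarrow> k < n \<and> es k"
  unfolding Sset_def by (simp add: Abs_fset_inverse)

lemma Sset_Suc: "Sset es (Suc n) = dadd (Sset es n) (if es n then gen n else {||})"
  by (rule fset_eqI) (auto simp: dadd_mem Sset_mem gen_def less_Suc_eq)

definition below :: "nat \<Rightarrow> nat fset \<Rightarrow> bool" where
  "below N h \<longleftrightarrow> (\<forall>i. i |\<in>| h \<longrightarrow> i < N)"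

lemma phi_step:
  assumes "v \<in> OP (Suc N)" "below N h"
  shows "phi (Suc N) v (dadd h (if b then gen N else {||})) = phi N (comp b v) h"
proof -
  obtain a c where v: "v = Node a c" using assms(1) by auto
  show ?thesis
  proof (cases b)
    case True
    have nb: "\<not> (\<forall>i. i |\<in>| dadd h (gen N) \<longrightarrow> i < N)"
      using assms(2) by (auto simp: below_def dadd_mem gen_def)
    have eq: "dadd (gen N) (dadd h (gen N)) = h"
      by (metis dadd_assoc dadd_comm dadd_empty dadd_self)
    have "phi (Suc N) (Node a c) (dadd h (gen N)) = phi N c h"
      by (subst phi.simps) (simp only: nb eq if_False)
    then show ?thesis using True v by (simp del: phi.simps)
  next
    case False
    then show ?thesis using v assms(2) by (simp add: dadd_empty below_def)
  qed
qed

lemma pathsD1: "(vs, es) \<in> paths \<Longrightarrow> vs n \<in> OP n"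
  unfolding paths_def by blast
lemma pathsD2:
  assumes "(vs, es) \<in> paths" shows "comp (es n) (vs (Suc n)) = vs n"
proof -
  have "\<forall>n. vs n \<in> OP n \<and> vs n = comp (es n) (vs (Suc n))" using assms unfolding paths_def by blast
  from this[rule_format, of n] show ?thesis by (rule sym[OF conjunct2])
qed

lemma Fmap_eq:
  assumes x: "x \<in> paths" and g: "below N g" and N: "0 < N"
  shows "Fmap x g = phi N (fst x N) (dadd g (Sset (snd x) N))"
proof -
  obtain vs es where xe: "x = (vs, es)" by (cases x)
  have xp: "(vs, es) \<in> paths" using x xe by simp
  define m where "m = Suc (Max (insert 0 (fset g)))"
  have Fm: "Fmap x g = phi m (vs m) (dadd g (Sset es m))"
    unfolding Fmap_def Sset_def m_def xe by (simp add: Let_def)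
  have bm: "below m g"
    unfolding below_def m_def by (auto simp: less_Suc_eq_le intro!: Max_ge)
  have mN: "m \<le> N"
  proof -
    have "Max (insert 0 (fset g)) < N"
      using g N by (auto simp: below_def)
    then show ?thesis unfolding m_def by (rule Suc_leI)
  qed
  have "phi N (vs N) (dadd g (Sset es N)) = phi m (vs m) (dadd g (Sset es m))"
    using mN
  proof (induction N rule: dec_induct)
    case base
    then show ?case by simp
  next
    case (step n)
    have bn: "below n (dadd g (Sset es n))"
      using bm step(1) by (auto simp: below_def dadd_mem Sset_mem)
    have "phi (Suc n) (vs (Suc n)) (dadd g (Sset es (Suc n)))
        = phi (Suc n) (vs (Suc n)) (dadd (dadd g (Sset es n)) (if es n then gen n else {||}))"
      by (simp only: Sset_Suc dadd_assoc)
    also have "\<dots> = phi n (comp (es n) (vs (Suc n))) (dadd g (Sset es n))"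
      by (rule phi_step[OF pathsD1[OF xp] bn])
    also have "\<dots> = phi n (vs n) (dadd g (Sset es n))" by (simp only: pathsD2[OF xp])
    finally show ?case using step by simp
  qed
  then have "Fmap x g = phi N (vs N) (dadd g (Sset es N))" using Fm by (simp only:)
  then show ?thesis unfolding xe fst_conv snd_conv .
qed

lemma phi_Node: "phi (Suc n) (Node a b) h = (if below n h then phi n a h else phi n b (dadd (gen n) h))"
  by (simp add: below_def)

lemma below_Max: "below (Suc (Max (insert 0 (fset g)))) g"
  unfolding below_def by (auto simp: less_Suc_eq_le intro!: Max_ge)

lemma below0: "below 0 h \<Longrightarrow> h = {||}"
  unfolding below_def by (rule fset_eqI) auto

lemma below_flip: "below (Suc n) h \<Longrightarrow> \<not> below n h \<Longrightarrow> below n (dadd (gen n) h)"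
  unfolding below_def by (auto simp: dadd_mem gen_def less_Suc_eq)

lemma below_Suc: "below n h \<Longrightarrow> below (Suc n) h"
  unfolding below_def by auto

lemma below_flip2: "below n h \<Longrightarrow> \<not> below n (dadd (gen n) h)"
  unfolding below_def by (auto simp: dadd_mem gen_def)

lemma below_flip3: "below n h \<Longrightarrow> below (Suc n) (dadd (gen n) h)"
  unfolding below_def by (auto simp: dadd_mem gen_def)

lemma dadd_cancel_left: "dadd a (dadd a h) = h"
  by (rule fset_eqI) (auto simp: dadd_mem)

fun mk :: "nat \<Rightarrow> (nat fset \<Rightarrow> bool) \<Rightarrow> optree" where
  "mk 0 p = Leaf (p {||})"
| "mk (Suc n) p = Node (mk n p) (mk n (\<lambda>h. p (dadd (gen n) h)))"

lemma mk_OP: "mk n p \<in> OP n"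
  by (induction n arbitrary: p) auto

lemma phi_mk: "below n h \<Longrightarrow> phi n (mk n p) h = p h"
proof (induction n arbitrary: p h)
  case 0
  then show ?case using below0[OF 0] by simp
next
  case (Suc n)
  show ?case
  proof (cases "below n h")
    case True
    then show ?thesis using Suc.IH by (simp only: mk.simps phi_Node if_True)
  next
    case False
    have "below n (dadd (gen n) h)" using below_flip Suc.prems False by blast
    then show ?thesis using Suc.IH False by (simp only: mk.simps phi_Node if_False dadd_cancel_left)
  qed
qed

lemma phi_inj: "v \<in> OP n \<Longrightarrow> w \<in> OP n \<Longrightarrow> (\<And>h. below n h \<Longrightarrow> phi n v h = phi n w h) \<Longrightarrow> v = w"
proof (induction n arbitrary: v w)
  case 0
  then obtain a b where "v = Leaf a" "w = Leaf b" by auto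
  moreover have "below 0 {||}" by (simp add: below_def)
  ultimately show ?case using "0.prems"(3) by fastforce
next
  case (Suc n)
  then obtain a0 a1 b0 b1 where v: "v = Node a0 a1" and w: "w = Node b0 b1"
    and a: "a0 \<in> OP n" "a1 \<in> OP n" and b: "b0 \<in> OP n" "b1 \<in> OP n" by auto
  have "a0 = b0"
  proof (rule Suc.IH[OF a(1) b(1)])
    fix h assume h: "below n h"
    have "phi (Suc n) v h = phi (Suc n) w h" using Suc.prems(3) below_Suc[OF h] by blast
    then show "phi n a0 h = phi n b0 h" using h v w by (simp only: phi_Node if_True)
  qed
  moreover have "a1 = b1"
  proof (rule Suc.IH[OF a(2) b(2)])
    fix h assume h: "below n h"
    have "phi (Suc n) v (dadd (gen n) h) = phi (Suc n) w (dadd (gen n) h)"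
      using Suc.prems(3) below_flip3[OF h] by blast
    then show "phi n a1 h = phi n b1 h" using below_flip2[OF h] v w
      by (simp only: phi_Node if_False dadd_cancel_left)
  qed
  ultimately show ?case using v w by (simp only:)
qed

lemma Fmap_phi:
  assumes x: "(vs, es) \<in> paths" and h: "below N h" and N: "0 < N"
  shows "phi N (vs N) h = Fmap (vs, es) (dadd h (Sset es N))"
proof -
  have "below N (dadd h (Sset es N))" using h by (auto simp: below_def dadd_mem Sset_mem)
  from Fmap_eq[OF x this N] show ?thesis by (simp add: dadd_assoc dadd_self dadd_empty)
qed

lemma Psi_inj: "inj_on Psi paths"
proof (rule inj_onI)
  fix x y assume x: "x \<in> paths" and y: "y \<in> paths" and e: "Psi x = Psi y"
  obtain vs es where xe: "x = (vs, es)" by (cases x)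
  obtain ws es' where ye: "y = (ws, es')" by (cases y)
  have ees: "es' = es" using e xe ye by (simp add: Psi_def Amap_def)
  have xp: "(vs, es) \<in> paths" and yp: "(ws, es) \<in> paths" using x y xe ye ees by auto
  have F: "Fmap (vs, es) = Fmap (ws, es)" using e xe ye ees by (simp add: Psi_def)
  have pos: "vs N = ws N" if N: "0 < N" for N
  proof (rule phi_inj[OF pathsD1[OF xp] pathsD1[OF yp]])
    fix h assume h: "below N h"
    show "phi N (vs N) h = phi N (ws N) h"
      unfolding Fmap_phi[OF xp h N] Fmap_phi[OF yp h N] F ..
  qed
  have "vs N = ws N" for N
  proof (cases N)
    case 0
    have "vs 0 = comp (es 0) (vs (Suc 0))" using pathsD2[OF xp, of 0] by simp
    also have "\<dots> = comp (es 0) (ws (Suc 0))" using pos[of "Suc 0"] by simp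
    also have "\<dots> = ws 0" using pathsD2[OF yp, of 0] by simp
    finally show ?thesis using 0 by simp
  next
    case (Suc n) then show ?thesis using pos by simp
  qed
  then show "x = y" using xe ye ees by auto
qed

lemma dadd_lem: "dadd (dadd a h) (dadd s a) = dadd h s"
  by (rule fset_eqI) (auto simp: dadd_mem)

lemma Psi_surj: "Psi ` paths = UNIV"
proof -
  have "(f, \<alpha>) \<in> Psi ` paths" for f \<alpha>
  proof -
    define vs where "vs n = mk n (\<lambda>h. f (dadd h (Sset \<alpha> n)))" for n
    have xp: "(vs, \<alpha>) \<in> paths"
      unfolding paths_def
    proof (clarify)
      fix n
      show "vs n \<in> OP n \<and> vs n = comp (\<alpha> n) (vs (Suc n))"
      proof (cases "\<alpha> n")
        case True
        have "(\<lambda>h. f (dadd (dadd (gen n) h) (Sset \<alpha> (Suc n)))) = (\<lambda>h. f (dadd h (Sset \<alpha> n)))"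
          using True by (simp only: Sset_Suc if_True dadd_lem)
        then show ?thesis using True by (simp add: vs_def mk_OP)
      next
        case False
        have "(\<lambda>h. f (dadd h (Sset \<alpha> (Suc n)))) = (\<lambda>h. f (dadd h (Sset \<alpha> n)))"
          using False by (simp only: Sset_Suc if_False dadd_empty)
        then show ?thesis using False by (simp add: vs_def mk_OP)
      qed
    qed
    have "Fmap (vs, \<alpha>) = f"
    proof
      fix g
      define N where "N = Suc (Max (insert 0 (fset g)))"
      have b: "below N g" unfolding N_def by (rule below_Max)
      have b2: "below N (dadd g (Sset \<alpha> N))" using b by (auto simp: below_def dadd_mem Sset_mem)
      have "Fmap (vs, \<alpha>) g = phi N (vs N) (dadd g (Sset \<alpha> N))"
        using Fmap_eq[OF xp b] by (simp add: N_def)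
      also have "\<dots> = f (dadd (dadd g (Sset \<alpha> N)) (Sset \<alpha> N))"
        unfolding vs_def by (rule phi_mk[OF b2])
      also have "\<dots> = f g" by (simp only: dadd_assoc dadd_self dadd_empty)
      finally show "Fmap (vs, \<alpha>) g = f g" .
    qed
    then have "Psi (vs, \<alpha>) = (f, \<alpha>)" by (simp add: Psi_def Amap_def)
    then show ?thesis using xp by (metis image_eqI)
  qed
  then show ?thesis by auto
qed

lemma Psi_bij: "bij_betw Psi paths UNIV"
  using Psi_inj Psi_surj by (simp add: bij_betw_def)

lemma comp_OP: "v \<in> OP (Suc n) \<Longrightarrow> comp b v \<in> OP n"
  by (cases b) auto

lemma descend_OP: "w \<in> OP N \<Longrightarrow> d \<le> N \<Longrightarrow> descend es N w d \<in> OP (N - d)"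
proof (induction d)
  case 0 then show ?case by simp
next
  case (Suc d)
  have "descend es N w d \<in> OP (Suc (N - Suc d))"
    using Suc by (simp add: Suc_diff_Suc)
  then show ?case by (simp add: comp_OP)
qed

lemma path_descend:
  assumes xp: "(vs, es) \<in> paths"
  shows "d \<le> N \<Longrightarrow> descend es N (vs N) d = vs (N - d)"
proof (induction d)
  case 0 then show ?case by simp
next
  case (Suc d)
  have e: "N - d = Suc (N - Suc d)" using Suc.prems by simp
  have "descend es N (vs N) (Suc d) = comp (es (N - Suc d)) (vs (N - d))"
    using Suc by simp
  also have "\<dots> = vs (N - Suc d)" unfolding e by (rule pathsD2[OF xp])
  finally show ?case .
qed

lemma reroute:
  assumes xp: "(vs, es) \<in> paths" and agree: "\<And>k. m < k \<Longrightarrow> es' k = es k"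
  shows "(\<lambda>k. if m < k then vs k else descend es' (Suc m) (vs (Suc m)) (Suc m - k), es') \<in> paths"
proof -
  define vs' where "vs' k = (if m < k then vs k else descend es' (Suc m) (vs (Suc m)) (Suc m - k))" for k
  have "vs' n \<in> OP n \<and> vs' n = comp (es' n) (vs' (Suc n))" for n
  proof (cases "m < n")
    case True
    then show ?thesis using pathsD1[OF xp] pathsD2[OF xp] agree[OF True] by (simp add: vs'_def)
  next
    case False
    have mem: "vs' n \<in> OP n"
    proof -
      have "descend es' (Suc m) (vs (Suc m)) (Suc m - n) \<in> OP (Suc m - (Suc m - n))"
        by (rule descend_OP[OF pathsD1[OF xp]]) simp
      then show ?thesis using False by (simp add: vs'_def)
    qed
    have e1: "Suc m - n = Suc (Suc m - Suc n)" using False by simp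
    have e2: "Suc m - Suc (Suc m - Suc n) = n" using False by simp
    have "vs' n = comp (es' n) (descend es' (Suc m) (vs (Suc m)) (Suc m - Suc n))"
      using False by (simp only: vs'_def if_False e1 descend.simps e2)
    also have "descend es' (Suc m) (vs (Suc m)) (Suc m - Suc n) = vs' (Suc n)"
    proof (cases "n = m")
      case True then show ?thesis by (simp add: vs'_def)
    next
      case False2: False
      then show ?thesis using False by (simp add: vs'_def)
    qed
    finally show ?thesis using mem by simp
  qed
  then show ?thesis unfolding paths_def vs'_def by blast
qed

lemma snd_adic: "snd (adic x) = odometer (snd x)"
  unfolding adic_def odometer_def Let_def by simp

lemma fst_adic: "fst (adic (vs, es)) = (\<lambda>k. if (LEAST k. \<not> es k) < k then vs k
     else descend (odometer es) (Suc (LEAST k. \<not> es k)) (vs (Suc (LEAST k. \<not> es k))) (Suc (LEAST k. \<not> es k) - k))"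
  by (simp only: adic_def odometer_def Let_def fst_conv snd_conv)

lemma odometer_agree: "(LEAST k. \<not> es k) < k \<Longrightarrow> odometer es k = es k"
  unfolding odometer_def Let_def by simp

lemma adic_paths:
  assumes x: "x \<in> paths" shows "adic x \<in> paths"
proof -
  obtain vs es where xe: "x = (vs, es)" by (cases x)
  have xp: "(vs, es) \<in> paths" using x xe by simp
  have "adic (vs, es) = (fst (adic (vs, es)), snd (adic (vs, es)))" by simp
  also have "\<dots> \<in> paths" unfolding fst_adic snd_adic snd_conv
    by (rule reroute[OF xp]) (rule odometer_agree)
  finally show ?thesis using xe by simp
qed

lemma least_facts:
  fixes es :: "nat \<Rightarrow> bool"
  assumes "\<exists>k. \<not> es k"
  shows "\<not> es (LEAST k. \<not> es k)" "\<And>k. k < (LEAST k. \<not> es k) \<Longrightarrow> es k"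
proof -
  show "\<not> es (LEAST k. \<not> es k)" by (rule LeastI_ex[where P="\<lambda>k. \<not> es k", OF assms])
  fix k assume "k < (LEAST k. \<not> es k)"
  from not_less_Least[where P="\<lambda>k. \<not> es k", OF this] show "es k" by (rule notnotD)
qed

lemma odometer_val: "odometer es k = (if k < (LEAST k. \<not> es k) then False else if k = (LEAST k. \<not> es k) then True else es k)"
  unfolding odometer_def Let_def by simp

definition Dn :: "nat \<Rightarrow> nat fset" where "Dn n = Abs_fset {k. k \<le> n}"

lemma Dn_mem: "k |\<in>| Dn n \<longleftrightarrow> k \<le> n"
  unfolding Dn_def by (simp add: Abs_fset_inverse)

lemma tau_inj: "inj tau"
  by (rule injI) (rule fset_eqI, metis tau_def)

lemma tau_Dn:
  assumes ex: "\<exists>k. \<not> es k"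
  shows "inv tau (seq_sub (odometer es) es) = Dn (LEAST k. \<not> es k)"
proof -
  define n where "n = (LEAST k. \<not> es k)"
  note lf = least_facts[OF ex, folded n_def]
  have "seq_sub (odometer es) es k = tau (Dn n) k" for k
  proof -
    have o: "odometer es k = (if k < n then False else if k = n then True else es k)"
      unfolding n_def by (rule odometer_val)
    show ?thesis unfolding seq_sub_def tau_def Dn_mem o
      using lf by (cases "k < n"; cases "k = n"; simp)
  qed
  then have "seq_sub (odometer es) es = tau (Dn n)" by (rule ext)
  then show ?thesis using inv_f_f[OF tau_inj] n_def by simp
qed

lemma Fmap_adic:
  assumes x: "x \<in> paths" and ex: "\<exists>k. \<not> snd x k"
  shows "Fmap (adic x) g = Fmap x (dadd g (Dn (LEAST k. \<not> snd x k)))"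
proof -
  obtain vs es where xe: "x = (vs, es)" by (cases x)
  have xp: "(vs, es) \<in> paths" using x xe by simp
  have ex': "\<exists>k. \<not> es k" using ex xe by simp
  define n where "n = (LEAST k. \<not> es k)"
  note lf = least_facts[OF ex', folded n_def]
  define N where "N = max (Suc n) (Suc (Max (insert 0 (fset g))))"
  have bg: "below N g" using below_Max[of g] unfolding N_def below_def by fastforce
  have bg2: "below N (dadd g (Dn n))" using bg unfolding N_def below_def
    by (auto simp: dadd_mem Dn_mem)
  have N0: "0 < N" unfolding N_def by simp
  have nN: "n < N" unfolding N_def by simp
  have ap: "adic x \<in> paths" by (rule adic_paths[OF x])
  obtain vs' es' where ae: "adic x = (vs', es')" by (cases "adic x")
  have es': "es' = odometer es" using ae xe snd_adic[of x] by simp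
  have vs': "vs' N = vs N" using ae xe fst_adic[of vs es] nN by (simp add: n_def)
  have "Fmap (adic x) g = phi N (vs' N) (dadd g (Sset es' N))"
    using Fmap_eq[OF ap bg N0] ae by simp
  also have "dadd g (Sset es' N) = dadd (dadd g (Dn n)) (Sset es N)"
  proof (rule fset_eqI)
    fix k
    show "k |\<in>| dadd g (Sset es' N) \<longleftrightarrow> k |\<in>| dadd (dadd g (Dn n)) (Sset es N)"
      using lf nN unfolding dadd_mem Sset_mem Dn_mem es' odometer_val n_def[symmetric]
      by (cases "k < n"; cases "k = n"; auto)
  qed
  also have "phi N (vs' N) (dadd (dadd g (Dn n)) (Sset es N)) = Fmap x (dadd g (Dn n))"
    using Fmap_eq[OF x bg2 N0] xe vs' by simp
  finally show ?thesis using xe n_def by simp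
qed

lemma iter_snd: "snd ((adic ^^ k) x) = (odometer ^^ k) (snd x)"
  by (induction k) (simp_all add: snd_adic)

lemma iter_paths: "x \<in> paths \<Longrightarrow> (adic ^^ k) x \<in> paths"
  by (induction k) (simp_all add: adic_paths)

lemma finmod:
  assumes a: "a \<in> I_inf" and agr: "\<And>k. m < k \<Longrightarrow> b k = a k"
  shows "b \<in> I_inf"
proof -
  have s1: "{k. a k} \<subseteq> {k. b k} \<union> {..m}" using agr by fastforce
  have s2: "{k. \<not> a k} \<subseteq> {k. \<not> b k} \<union> {..m}" using agr by fastforce
  have "infinite {k. b k}"
  proof
    assume "finite {k. b k}"
    then have "finite ({k. b k} \<union> {..m})" by simp
    then have "finite {k. a k}" using s1 finite_subset by blast
    then show False using a by (simp add: I_inf_def)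
  qed
  moreover have "infinite {k. \<not> b k}"
  proof
    assume "finite {k. \<not> b k}"
    then have "finite ({k. \<not> b k} \<union> {..m})" by simp
    then have "finite {k. \<not> a k}" using s2 finite_subset by blast
    then show False using a by (simp add: I_inf_def)
  qed
  ultimately show ?thesis by (simp add: I_inf_def)
qed

lemma I_inf_false: "a \<in> I_inf \<Longrightarrow> \<exists>k. \<not> a k"
proof -
  assume "a \<in> I_inf"
  then have "infinite {k. \<not> a k}" by (simp add: I_inf_def)
  then have "{k. \<not> a k} \<noteq> {}" by (metis finite.emptyI)
  then show ?thesis by blast
qed

lemma I_inf_true: "a \<in> I_inf \<Longrightarrow> \<exists>k. a k"
proof -
  assume "a \<in> I_inf"
  then have "infinite {k. a k}" by (simp add: I_inf_def)
  then have "{k. a k} \<noteq> {}" by (metis finite.emptyI)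
  then show ?thesis by blast
qed

lemma odometer_I_inf: "a \<in> I_inf \<Longrightarrow> odometer a \<in> I_inf"
  by (rule finmod[where m="LEAST k. \<not> a k"]) (simp_all add: odometer_agree)

lemma iter_I_inf: "a \<in> I_inf \<Longrightarrow> (odometer ^^ k) a \<in> I_inf"
  by (induction k) (simp_all add: odometer_I_inf)

definition pred :: "path \<Rightarrow> path" where
  "pred x = (let vs = fst x; es = snd x; m = (LEAST k. es k);
     es' = (\<lambda>k. if k < m then True else if k = m then False else es k)
   in ((\<lambda>k. if m < k then vs k else descend es' (Suc m) (vs (Suc m)) (Suc m - k)), es'))"

lemma least_facts2:
  fixes es :: "nat \<Rightarrow> bool"
  assumes "\<exists>k. es k"
  shows "es (LEAST k. es k)" "\<And>k. k < (LEAST k. es k) \<Longrightarrow> \<not> es k"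
proof -
  show "es (LEAST k. es k)" by (rule LeastI_ex[where P="\<lambda>k. es k", OF assms])
  fix k assume "k < (LEAST k. es k)"
  from not_less_Least[where P="\<lambda>k. es k", OF this] show "\<not> es k" .
qed

lemma pred_props:
  assumes xp: "(vs, es) \<in> paths" and ex: "\<exists>k. es k"
  shows "pred (vs, es) \<in> paths" "\<not> snd (pred (vs, es)) (LEAST k. es k)"
    "\<And>k. (LEAST k. es k) < k \<Longrightarrow> snd (pred (vs, es)) k = es k"
    "adic (pred (vs, es)) = (vs, es)"
proof -
  define m where "m = (LEAST k. es k)"
  note lf = least_facts2[OF ex, folded m_def]
  define es' where "es' = (\<lambda>k. if k < m then True else if k = m then False else es k)"
  define vs' where "vs' = (\<lambda>k. if m < k then vs k else descend es' (Suc m) (vs (Suc m)) (Suc m - k))"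
  have pe: "pred (vs, es) = (vs', es')"
    unfolding pred_def Let_def fst_conv snd_conv m_def[symmetric] es'_def[symmetric] vs'_def ..
  show "pred (vs, es) \<in> paths" unfolding pe vs'_def
    by (rule reroute[OF xp]) (simp add: es'_def)
  show "\<not> snd (pred (vs, es)) (LEAST k. es k)" unfolding pe m_def[symmetric] by (simp add: es'_def)
  show "\<And>k. (LEAST k. es k) < k \<Longrightarrow> snd (pred (vs, es)) k = es k"
    unfolding pe m_def[symmetric] by (simp add: es'_def)
  have L: "(LEAST k. \<not> es' k) = m"
  proof (rule Least_equality)
    show "\<not> es' m" by (simp add: es'_def)
    fix y assume "\<not> es' y" then show "m \<le> y" by (simp add: es'_def split: if_splits)
  qed
  have O: "odometer es' = es"
  proof
    fix k
    have o: "odometer es' k = (if k < m then False else if k = m then True else es' k)"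
      using odometer_val[of es' k] unfolding L .
    show "odometer es' k = es k" unfolding o using lf
      by (cases "k < m"; cases "k = m"; simp add: es'_def)
  qed
  have F: "fst (adic (vs', es')) = vs"
  proof
    fix k
    have f: "fst (adic (vs', es')) k = (if m < k then vs' k else descend es (Suc m) (vs' (Suc m)) (Suc m - k))"
      unfolding fst_adic L O ..
    show "fst (adic (vs', es')) k = vs k"
    proof (cases "m < k")
      case True then show ?thesis unfolding f by (simp add: vs'_def)
    next
      case False
      have "descend es (Suc m) (vs (Suc m)) (Suc m - k) = vs (Suc m - (Suc m - k))"
        by (rule path_descend[OF xp]) simp
      then show ?thesis unfolding f using False by (simp add: vs'_def)
    qed
  qed
  have S: "snd (adic (vs', es')) = es" unfolding snd_adic snd_conv O ..
  show "adic (pred (vs, es)) = (vs, es)" unfolding pe using F S by (metis prod.collapse)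
qed

lemma backward:
  "x \<in> paths \<Longrightarrow> snd x \<in> I_inf \<Longrightarrow> \<exists>y\<in>paths. (\<forall>j<k. (adic ^^ j) y \<in> adic_dom) \<and> (adic ^^ k) y = x"
proof (induction k arbitrary: x)
  case 0
  then show ?case by auto
next
  case (Suc k)
  obtain vs es where xe: "x = (vs, es)" by (cases x)
  have xp: "(vs, es) \<in> paths" using Suc.prems xe by simp
  have ai: "es \<in> I_inf" using Suc.prems xe by simp
  have ex: "\<exists>k. es k" by (rule I_inf_true[OF ai])
  note pp = pred_props[OF xp ex]
  have pi: "snd (pred (vs, es)) \<in> I_inf"
    by (rule finmod[OF ai, where m="LEAST k. es k"]) (rule pp(3))
  obtain y where y: "y \<in> paths" "\<forall>j<k. (adic ^^ j) y \<in> adic_dom" "(adic ^^ k) y = pred (vs, es)"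
    using Suc.IH[OF pp(1) pi] by blast
  have pd: "pred (vs, es) \<in> adic_dom" unfolding adic_dom_def using pp(1) pp(2) by blast
  have "\<forall>j<Suc k. (adic ^^ j) y \<in> adic_dom"
    using y(2) y(3) pd by (metis less_Suc_eq)
  moreover have "(adic ^^ Suc k) y = x" using y(3) pp(4) xe by simp
  ultimately show ?case using y(1) by blast
qed

definition val :: "nat \<Rightarrow> (nat \<Rightarrow> bool) \<Rightarrow> nat" where
  "val N a = (\<Sum>i<N. if a i then 2 ^ i else 0)"

lemma val_Suc: "val (Suc N) a = val N a + (if a N then 2 ^ N else 0)"
  unfolding val_def by simp

lemma val_lt: "val N a < 2 ^ N"
proof (induction N)
  case 0 then show ?case by (simp add: val_def)
next
  case (Suc N)
  have "val (Suc N) a \<le> val N a + 2 ^ N" unfolding val_Suc by simp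
  then show ?case using Suc by simp
qed

lemma sum_pow2: "Suc (\<Sum>i<n. (2::nat) ^ i) = 2 ^ n"
  by (induction n) simp_all

lemma val_odo:
  fixes a :: "nat \<Rightarrow> bool"
  assumes ex: "\<exists>k. \<not> a k" and nN: "(LEAST k. \<not> a k) < N"
  shows "val N (odometer a) = Suc (val N a)"
proof -
  define n where "n = (LEAST k. \<not> a k)"
  note lf = least_facts[OF ex, folded n_def]
  have o: "\<And>k. odometer a k = (if k < n then False else if k = n then True else a k)"
    unfolding n_def by (rule odometer_val)
  have "Suc n \<le> N" using nN n_def by simp
  then show ?thesis
  proof (induction N rule: dec_induct)
    case base
    have z: "val n (odometer a) = 0" unfolding val_def by (rule sum.neutral) (simp add: o)
    have w: "val n a = (\<Sum>i<n. 2 ^ i)" unfolding val_def by (rule sum.cong) (simp_all add: lf)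
    show ?case unfolding val_Suc z w using lf(1) sum_pow2[of n] by (simp add: o)
  next
    case (step m)
    have "odometer a m = a m" using step(1) by (simp add: o)
    then show ?case unfolding val_Suc using step by simp
  qed
qed

lemma finite_bound: "finite {k::nat. P k} \<Longrightarrow> \<exists>N. \<forall>k\<ge>N. \<not> P k"
proof -
  assume "finite {k::nat. P k}"
  then obtain N where "\<forall>n\<in>{k. P k}. n < N" unfolding finite_nat_set_iff_bounded by blast
  then show ?thesis by (metis mem_Collect_eq not_le)
qed

lemma forward_inf:
  assumes x: "x \<in> paths" and dom: "\<forall>k. (adic ^^ k) x \<in> adic_dom"
  shows "infinite {k. \<not> snd x k}"
proof
  assume "finite {k. \<not> snd x k}"
  then obtain N where N: "\<forall>k\<ge>N. snd x k" using finite_bound[of "\<lambda>k. \<not> snd x k"] by auto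
  define z where "z j = (odometer ^^ j) (snd x)" for j
  have zex: "\<exists>k. \<not> z j k" for j
    using dom[rule_format, of j] unfolding adic_dom_def z_def iter_snd[symmetric] by blast
  have "(\<forall>i\<ge>N. z j i) \<and> val N (z j) = val N (snd x) + j" for j
  proof (induction j)
    case 0 then show ?case using N by (simp add: z_def)
  next
    case (Suc j)
    have zs: "z (Suc j) = odometer (z j)" by (simp add: z_def)
    have lt: "(LEAST k. \<not> z j k) < N"
    proof (rule ccontr)
      assume "\<not> (LEAST k. \<not> z j k) < N"
      then have "z j (LEAST k. \<not> z j k)" using Suc.IH by simp
      then show False using least_facts(1)[OF zex[of j]] by simp
    qed
    have "\<forall>i\<ge>N. z (Suc j) i" using Suc.IH lt odometer_agree[of "z j"] zs by auto
    moreover have "val N (z (Suc j)) = val N (snd x) + Suc j"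
      using val_odo[OF zex[of j] lt] Suc.IH zs by simp
    ultimately show ?case by blast
  qed
  then have "val N (z (2 ^ N)) = val N (snd x) + 2 ^ N" by blast
  then show False using val_lt[of N "z (2 ^ N)"] by simp
qed

lemma odo_P:
  assumes ex: "\<exists>k. \<not> a k" and P: "\<exists>i\<ge>N. a i"
  shows "\<exists>i\<ge>N. odometer a i"
proof -
  obtain i where i: "i \<ge> N" "a i" using P by blast
  define n where "n = (LEAST k. \<not> a k)"
  note lf = least_facts[OF ex, folded n_def]
  have o: "\<And>k. odometer a k = (if k < n then False else if k = n then True else a k)"
    unfolding n_def by (rule odometer_val)
  show ?thesis
  proof (cases "n < i")
    case True then show ?thesis using i o[of i] by auto
  next
    case False
    then have "i \<le> n" by simp
    then show ?thesis using i o[of n] by (intro exI[of _ n]) auto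
  qed
qed

lemma odo_notP:
  assumes ex: "\<exists>k. \<not> a k" and nP: "\<not> (\<exists>i\<ge>N. odometer a i)"
  shows "(LEAST k. \<not> a k) < N"
proof (rule ccontr)
  assume "\<not> (LEAST k. \<not> a k) < N"
  moreover have "odometer a (LEAST k. \<not> a k)" by (simp add: odometer_val)
  ultimately show False using nP by auto
qed

lemma backward_inf:
  assumes x: "x \<in> paths"
    and bw: "\<forall>k. \<exists>y \<in> paths. (\<forall>j<k. (adic ^^ j) y \<in> adic_dom) \<and> (adic ^^ k) y = x"
  shows "infinite {k. snd x k}"
proof
  assume "finite {k. snd x k}"
  then obtain N where N: "\<forall>k\<ge>N. \<not> snd x k" using finite_bound[of "\<lambda>k. snd x k"] by auto
  define K where "K = (2::nat) ^ N"
  obtain y where y: "y \<in> paths" "\<forall>j<K. (adic ^^ j) y \<in> adic_dom" "(adic ^^ K) y = x"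
    using bw by blast
  define z where "z j = (odometer ^^ j) (snd y)" for j
  have zex: "j < K \<Longrightarrow> \<exists>k. \<not> z j k" for j
    using y(2)[rule_format, of j] unfolding adic_dom_def z_def iter_snd[symmetric] by blast
  have zK: "z K = snd x" using y(3) iter_snd[of K y] by (simp add: z_def)
  have zs: "z (Suc j) = odometer (z j)" for j by (simp add: z_def)
  have Pprop: "j + d \<le> K \<Longrightarrow> (\<exists>i\<ge>N. z j i) \<Longrightarrow> (\<exists>i\<ge>N. z (j + d) i)" for j d
  proof (induction d)
    case 0 then show ?case by simp
  next
    case (Suc d)
    have "\<exists>i\<ge>N. z (j + d) i" using Suc by simp
    moreover have "\<exists>k. \<not> z (j + d) k" using zex Suc.prems(1) by simp
    ultimately show ?case using odo_P zs by simp
  qed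
  have nP: "j \<le> K \<Longrightarrow> \<not> (\<exists>i\<ge>N. z j i)" for j
  proof
    assume "j \<le> K" "\<exists>i\<ge>N. z j i"
    then have "\<exists>i\<ge>N. z (j + (K - j)) i" using Pprop[of j "K - j"] by simp
    moreover have "j + (K - j) = K" using \<open>j \<le> K\<close> by simp
    ultimately obtain i where "i \<ge> N" "snd x i" using zK by auto
    then show False using N by blast
  qed
  have vj: "j \<le> K \<Longrightarrow> val N (z j) = val N (z 0) + j" for j
  proof (induction j)
    case 0 then show ?case by simp
  next
    case (Suc j)
    have ex: "\<exists>k. \<not> z j k" using zex Suc.prems by simp
    have np: "\<not> (\<exists>i\<ge>N. odometer (z j) i)" using nP[OF Suc.prems] unfolding zs .
    have lt: "(LEAST k. \<not> z j k) < N" by (rule odo_notP[OF ex np])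
    have v: "val N (z (Suc j)) = Suc (val N (z j))" unfolding zs by (rule val_odo[OF ex lt])
    have "val N (z j) = val N (z 0) + j" using Suc.IH Suc.prems by simp
    then show ?case using v by simp
  qed
  have "val N (z K) = val N (z 0) + K" by (rule vj) simp
  then show False using val_lt[of N "z K"] K_def by simp
qed

lemma T0_char: "T0 = {x \<in> paths. snd x \<in> I_inf}"
proof
  show "T0 \<subseteq> {x \<in> paths. snd x \<in> I_inf}"
  proof
    fix x assume "x \<in> T0"
    then have x: "x \<in> paths" and f: "\<forall>k. (adic ^^ k) x \<in> adic_dom"
      and b: "\<forall>k. \<exists>y \<in> paths. (\<forall>j<k. (adic ^^ j) y \<in> adic_dom) \<and> (adic ^^ k) y = x"
      unfolding T0_def by blast+
    show "x \<in> {x \<in> paths. snd x \<in> I_inf}"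
      using forward_inf[OF x f] backward_inf[OF x b] x by (simp add: I_inf_def)
  qed
next
  show "{x \<in> paths. snd x \<in> I_inf} \<subseteq> T0"
  proof
    fix x assume "x \<in> {x \<in> paths. snd x \<in> I_inf}"
    then have x: "x \<in> paths" and a: "snd x \<in> I_inf" by auto
    have "(adic ^^ k) x \<in> adic_dom" for k
    proof -
      have "snd ((adic ^^ k) x) \<in> I_inf" unfolding iter_snd by (rule iter_I_inf[OF a])
      then show ?thesis unfolding adic_dom_def using iter_paths[OF x] I_inf_false by blast
    qed
    then show "x \<in> T0" unfolding T0_def using x backward[OF x a] by blast
  qed
qed

theorem proposition1:
  shows "bij_betw Psi T0 (UNIV \<times> I_inf) \<and>
    (\<forall>f \<alpha>. \<alpha> \<in> I_inf \<longrightarrow>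
       adicPsi (f, \<alpha>) = ((\<lambda>g. f (dadd g (inv tau (seq_sub (odometer \<alpha>) \<alpha>)))), odometer \<alpha>))"
proof
  have inj: "inj_on Psi T0" using Psi_inj unfolding T0_char by (rule inj_on_subset) blast
  have img: "Psi ` T0 = UNIV \<times> I_inf"
  proof
    show "Psi ` T0 \<subseteq> UNIV \<times> I_inf" unfolding T0_char by (auto simp: Psi_def Amap_def)
    show "UNIV \<times> I_inf \<subseteq> Psi ` T0"
    proof
      fix p :: "(nat fset \<Rightarrow> bool) \<times> (nat \<Rightarrow> bool)" assume p: "p \<in> UNIV \<times> I_inf"
      obtain x where x: "x \<in> paths" "Psi x = p" using Psi_surj by (metis UNIV_I imageE)
      have "snd x \<in> I_inf" using x(2) p by (auto simp: Psi_def Amap_def)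
      then have "x \<in> T0" unfolding T0_char using x(1) by blast
      then show "p \<in> Psi ` T0" using x(2) by blast
    qed
  qed
  show "bij_betw Psi T0 (UNIV \<times> I_inf)" using inj img by (simp add: bij_betw_def)
next
  show "\<forall>f \<alpha>. \<alpha> \<in> I_inf \<longrightarrow>
       adicPsi (f, \<alpha>) = ((\<lambda>g. f (dadd g (inv tau (seq_sub (odometer \<alpha>) \<alpha>)))), odometer \<alpha>)"
  proof (intro allI impI)
    fix f \<alpha> assume a: "\<alpha> \<in> I_inf"
    have fa: "(f, \<alpha>) \<in> Psi ` paths" using Psi_surj by simp
    define x where "x = inv_into paths Psi (f, \<alpha>)"
    have x: "x \<in> paths" unfolding x_def by (rule inv_into_into[OF fa])
    have px: "Psi x = (f, \<alpha>)" unfolding x_def by (rule f_inv_into_f[OF fa])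
    have F: "Fmap x = f" and S: "snd x = \<alpha>" using px by (simp_all add: Psi_def Amap_def)
    have ex: "\<exists>k. \<not> snd x k" using I_inf_false[OF a] S by simp
    have "adicPsi (f, \<alpha>) = Psi (adic x)" by (simp add: adicPsi_def x_def)
    also have "\<dots> = (Fmap (adic x), odometer \<alpha>)" by (simp add: Psi_def Amap_def snd_adic S)
    also have "Fmap (adic x) = (\<lambda>g. f (dadd g (inv tau (seq_sub (odometer \<alpha>) \<alpha>))))"
    proof
      fix g
      show "Fmap (adic x) g = f (dadd g (inv tau (seq_sub (odometer \<alpha>) \<alpha>)))"
        unfolding Fmap_adic[OF x ex] F S tau_Dn[OF ex[unfolded S]] ..
    qed
    finally show "adicPsi (f, \<alpha>) = ((\<lambda>g. f (dadd g (inv tau (seq_sub (odometer \<alpha>) \<alpha>)))), odometer \<alpha>)" .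
  qed
qed
end
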